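(* (i) For every $r\ge 2$ there exist jointly distributed binary random variables $V_1,\dots,V_r$ for which $R^{s.c.}_{SW} > R_{SW}$ (for instance $V_1=V_2=\dots=V_r$ with $H(V_1)>0$, for which $R_{SW}=H(V_1)/r$ while $R^{s.c.}_{SW}=H(V_1)$). (ii) For every joint distribution $p(v_1,\dots,v_r)$ of binary random variables, $$R^{s.c.}_{SW}\le \min\Big(r\,R_{SW},\ \max_{1\le i\le r} H(V_i)\Big).$$
   Context: Let $V_1,\dots,V_r$ be jointly distributed binary random variables with joint law $p(v_1,\dots,v_r)$, and for each $n$ let $(V_1[t],\dots,V_r[t])$, $t=1,\dots,n$, be i.i.d. copies; write $V_i^n$ for the column vector $(V_i[1],\dots,V_i[n])^t\in\mathbb{F}_2^n$. A rate $R\ge 0$ is achievable with a common compression matrix if for every $\epsilon>0$ and all sufficiently large $n$ there exist a single binary matrix $B$ of size $\lceil nR\rceil\times n$ and a decoding map $g$ such that $\Pr\big[g(BV_1^n,\dots,BV_r^n)\neq (V_1^n,\dots,V_r^n)\big]\le\epsilon$, where the products $BV_i^n$ are computed over $\mathbb{F}_2$. $R^{s.c.}_{SW}$ denotes the infimum of all rates achievable with a common compression matrix. $R_{SW}$ denotes the minimum $R$ such that the symmetric rate tuple $(R,\dots,R)$ lies in the Slepian–Wolf region of $(V_1,\dots,V_r)$, i.e. the minimum $R$ with $|S|\,R\ge H(V_S\mid V_{S^c})$ for every nonempty $S\subseteq\{1,\dots,r\}$ (here $V_S=(V_i)_{i\in S}$). $H(\cdot)$ denotes Shannon entropy in bits.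 *)

theory Defs
  imports Complex_Main "HOL-Library.Z2"
begin

text \<open>Binary random variables V_0..V_(r-1) take values in the field F2 = bit.
  A joint outcome is a tuple v :: nat => bit, extensional (0 at indices >= r).\<close>

type_synonym tuple = "nat \<Rightarrow> bit"

definition tuples :: "nat \<Rightarrow> tuple set" where
  "tuples r = {v. \<forall>i. r \<le> i \<longrightarrow> v i = 0}"

definition is_joint_dist :: "nat \<Rightarrow> (tuple \<Rightarrow> real) \<Rightarrow> bool" where
  "is_joint_dist r p \<longleftrightarrow> (\<forall>v. 0 \<le> p v) \<and> (\<forall>v. v \<notin> tuples r \<longrightarrow> p v = 0)
     \<and> (\<Sum>v\<in>tuples r. p v) = 1"

definition restr :: "nat set \<Rightarrow> tuple \<Rightarrow> tuple" where
  "restr S v = (\<lambda>i. if i \<in> S then v i else 0)"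

definition marg :: "nat \<Rightarrow> (tuple \<Rightarrow> real) \<Rightarrow> nat set \<Rightarrow> tuple \<Rightarrow> real" where
  "marg r p S u = (\<Sum>v\<in>{v\<in>tuples r. restr S v = u}. p v)"

definition entropy :: "nat \<Rightarrow> (tuple \<Rightarrow> real) \<Rightarrow> nat set \<Rightarrow> real" where
  "entropy r p S = - (\<Sum>u\<in>restr S ` tuples r.
      (if marg r p S u = 0 then 0 else marg r p S u * log 2 (marg r p S u)))"

definition cond_entropy :: "nat \<Rightarrow> (tuple \<Rightarrow> real) \<Rightarrow> nat set \<Rightarrow> real" where
  "cond_entropy r p S = - (\<Sum>v\<in>tuples r.
      (if p v = 0 then 0
       else p v * log 2 (p v / marg r p ({..<r} - S) (restr ({..<r} - S) v))))"

definition R_SW :: "nat \<Rightarrow> (tuple \<Rightarrow> real) \<Rightarrow> real" where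
  "R_SW r p = Inf {R. \<forall>S. S \<subseteq> {..<r} \<and> S \<noteq> {} \<longrightarrow>
                         cond_entropy r p S \<le> real (card S) * R}"

text \<open>Blocks of n i.i.d. samples: x t is the t-th sample (t < n).\<close>
definition blocks :: "nat \<Rightarrow> nat \<Rightarrow> (nat \<Rightarrow> tuple) set" where
  "blocks r n = {x. (\<forall>t<n. x t \<in> tuples r) \<and> (\<forall>t. n \<le> t \<longrightarrow> x t = (\<lambda>_. 0))}"

definition block_prob :: "(tuple \<Rightarrow> real) \<Rightarrow> nat \<Rightarrow> (nat \<Rightarrow> tuple) \<Rightarrow> real" where
  "block_prob p n x = (\<Prod>t<n. p (x t))"

text \<open>Encoding with a common m x n matrix B over F2: for each source i < r,
  the vector B V_i^n, where V_i^n = (x 0 i, ..., x (n-1) i).\<close>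
definition encode :: "nat \<Rightarrow> nat \<Rightarrow> nat \<Rightarrow> (nat \<Rightarrow> nat \<Rightarrow> bit) \<Rightarrow> (nat \<Rightarrow> tuple)
    \<Rightarrow> (nat \<Rightarrow> nat \<Rightarrow> bit)" where
  "encode r m n B x = (\<lambda>i k. if i < r \<and> k < m then (\<Sum>j<n. B k j * x j i) else 0)"

definition err_prob :: "nat \<Rightarrow> (tuple \<Rightarrow> real) \<Rightarrow> nat \<Rightarrow> nat \<Rightarrow> (nat \<Rightarrow> nat \<Rightarrow> bit)
    \<Rightarrow> ((nat \<Rightarrow> nat \<Rightarrow> bit) \<Rightarrow> (nat \<Rightarrow> tuple)) \<Rightarrow> real" where
  "err_prob r p m n B g =
     (\<Sum>x\<in>blocks r n. if g (encode r m n B x) \<noteq> x then block_prob p n x else 0)"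

definition achievable_sc :: "nat \<Rightarrow> (tuple \<Rightarrow> real) \<Rightarrow> real \<Rightarrow> bool" where
  "achievable_sc r p R \<longleftrightarrow> 0 \<le> R \<and>
     (\<forall>\<epsilon>>0. \<exists>N. \<forall>n\<ge>N. \<exists>B g. err_prob r p (nat \<lceil>real n * R\<rceil>) n B g \<le> \<epsilon>)"

definition R_SW_sc :: "nat \<Rightarrow> (tuple \<Rightarrow> real) \<Rightarrow> real" where
  "R_SW_sc r p = Inf {R. achievable_sc r p R}"

end

theory Submission
  imports Defs "HOL-Library.FuncSet"
begin


lemma bit_cases2: "(b::bit) = 0 \<or> b = 1" by (cases b) auto

lemma tuples_sub: "tuples r \<subseteq> (\<lambda>S i. if i \<in> S then 1 else 0) ` Pow {..<r}"
proof
  fix v assume v: "v \<in> tuples r"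
  have "v = (\<lambda>i. if i \<in> {i. i < r \<and> v i = 1} then 1 else 0)"
  proof
    fix i show "v i = (if i \<in> {i. i < r \<and> v i = 1} then 1 else 0)"
      using v bit_cases2[of "v i"] by (auto simp: tuples_def)
  qed
  then show "v \<in> (\<lambda>S i. if i \<in> S then 1 else 0) ` Pow {..<r}" by blast
qed

lemma fin_tuples[simp]: "finite (tuples r)"
  by (rule finite_subset[OF tuples_sub]) auto

lemma card_tuples_le: "card (tuples r) \<le> 2 ^ r"
proof -
  have "card (tuples r) \<le> card ((\<lambda>S i. if i \<in> S then (1::bit) else 0) ` Pow {..<r})"
    by (rule card_mono[OF _ tuples_sub]) auto
  also have "\<dots> \<le> card (Pow {..<r})" by (rule card_image_le) auto
  finally show ?thesis by (simp add: card_Pow)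
qed

lemma zero_tuples[simp]: "(\<lambda>_. 0) \<in> tuples r" by (simp add: tuples_def)

definition mkb :: "nat \<Rightarrow> (nat \<Rightarrow> tuple) \<Rightarrow> nat \<Rightarrow> tuple" where
  "mkb n g = (\<lambda>t. if t < n then g t else (\<lambda>_. 0))"

lemma blocks_eq_img:
  assumes "\<And>t. t < n \<Longrightarrow> A t \<subseteq> tuples r"
  shows "{x \<in> blocks r n. \<forall>t<n. x t \<in> A t} = mkb n ` PiE {..<n} A"
proof
  show "{x \<in> blocks r n. \<forall>t<n. x t \<in> A t} \<subseteq> mkb n ` PiE {..<n} A"
  proof
    fix x assume x: "x \<in> {x \<in> blocks r n. \<forall>t<n. x t \<in> A t}"
    have "x = mkb n (restrict x {..<n})"
      using x by (auto simp: mkb_def blocks_def fun_eq_iff)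
    moreover have "restrict x {..<n} \<in> PiE {..<n} A" using x by auto
    ultimately show "x \<in> mkb n ` PiE {..<n} A" by blast
  qed
next
  show "mkb n ` PiE {..<n} A \<subseteq> {x \<in> blocks r n. \<forall>t<n. x t \<in> A t}"
    using assms by (fastforce simp: mkb_def blocks_def PiE_iff)
qed

lemma inj_mkb: "inj_on (mkb n) (PiE {..<n} A)"
proof (rule inj_onI)
  fix f g assume f: "f \<in> PiE {..<n} A" and g: "g \<in> PiE {..<n} A" and e: "mkb n f = mkb n g"
  show "f = g"
  proof
    fix t show "f t = g t"
    proof (cases "t < n")
      case True then show ?thesis using fun_cong[OF e, of t] by (simp add: mkb_def)
    next
      case False then show ?thesis using f g by (auto simp: PiE_iff extensional_def)
    qed
  qed
qed

lemma block_sum_prod: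
  assumes "\<And>t. t < n \<Longrightarrow> A t \<subseteq> tuples r"
  shows "(\<Sum>x\<in>{x \<in> blocks r n. \<forall>t<n. x t \<in> A t}. \<Prod>t<n. f t (x t)) = (\<Prod>t<n. \<Sum>v\<in>A t. (f t v :: real))"
proof -
  have fin: "\<And>t. t \<in> {..<n} \<Longrightarrow> finite (A t)"
    using assms by (meson finite_subset fin_tuples lessThan_iff)
  have "(\<Prod>t<n. \<Sum>v\<in>A t. f t v) = (\<Sum>g\<in>PiE {..<n} A. \<Prod>t<n. f t (g t))"
    by (rule prod_sum_PiE) (use fin in auto)
  also have "\<dots> = (\<Sum>g\<in>PiE {..<n} A. \<Prod>t<n. f t (mkb n g t))"
    by (intro sum.cong prod.cong) (auto simp: mkb_def)
  also have "\<dots> = (\<Sum>x\<in>mkb n ` PiE {..<n} A. \<Prod>t<n. f t (x t))"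
    by (rule sum.reindex[OF inj_mkb, symmetric, unfolded comp_def])
  finally show ?thesis using blocks_eq_img[OF assms] by simp
qed

lemma blocks_all: "{x \<in> blocks r n. \<forall>t<n. x t \<in> tuples r} = blocks r n"
  by (auto simp: blocks_def)

lemma fin_blocks[simp]: "finite (blocks r n)"
proof -
  have "blocks r n = mkb n ` PiE {..<n} (\<lambda>_. tuples r)"
    using blocks_eq_img[of n "\<lambda>_. tuples r" r] blocks_all by simp
  then show ?thesis by (simp add: finite_PiE)
qed

lemma block_sum_prod_all:
  "(\<Sum>x\<in>blocks r n. \<Prod>t<n. f (x t)) = (\<Sum>v\<in>tuples r. (f v :: real)) ^ n"
  using block_sum_prod[of n "\<lambda>_. tuples r" r "\<lambda>_. f"] blocks_all by simp

lemma zero_block[simp]: "(\<lambda>_. \<lambda>_. 0) \<in> blocks r n" by (simp add: blocks_def)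

lemma card_blocks_pos: "card (blocks r n) > 0"
  using zero_block card_gt_0_iff fin_blocks by blast



definition dot :: "nat \<Rightarrow> tuple \<Rightarrow> tuple \<Rightarrow> bit" where
  "dot n b c = (\<Sum>j<n. b j * c j)"

lemma bit_plus_self[simp]: "(a::bit) + a = 0" by (cases a) auto
lemma bit_add_one_eq0: "(a::bit) + 1 = 0 \<longleftrightarrow> a = 1" by (cases a) auto

lemma dot_flip:
  assumes j: "j0 < n" and c: "c j0 = 1"
  shows "dot n (b(j0 := b j0 + 1)) c = dot n b c + 1"
proof -
  have "dot n (b(j0 := b j0 + 1)) c = (\<Sum>j<n. b j * c j + (if j = j0 then c j else 0))"
    unfolding dot_def by (intro sum.cong) (auto simp: distrib_right)
  also have "\<dots> = dot n b c + c j0"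
    unfolding dot_def sum.distrib using j by simp
  finally show ?thesis using c by simp
qed

lemma half_count:
  assumes j: "j0 < n" and c: "c j0 = 1"
  shows "2 * card {b \<in> tuples n. dot n b c = 0} = card (tuples n)"
proof -
  let ?Z = "{b \<in> tuples n. dot n b c = 0}"
  let ?O = "{b \<in> tuples n. dot n b c = 1}"
  let ?f = "\<lambda>b. b(j0 := b j0 + 1)"
  have inv: "?f (?f b) = b" for b :: tuple
  proof -
    have "b j0 + 1 + 1 = b j0" using bit_cases2[of "b j0"] by auto
    then show ?thesis by (intro ext) simp
  qed
  have fin: "finite ?Z" "finite ?O" by auto
  have img: "?f ` ?Z = ?O"
  proof
    show "?f ` ?Z \<subseteq> ?O"
    proof
      fix y assume "y \<in> ?f ` ?Z"
      then obtain b where b: "b \<in> ?Z" and y: "y = ?f b" by blast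
      have "dot n y c = dot n b c + 1" unfolding y by (rule dot_flip[of j0 n c, OF j c])
      then have "dot n y c = 1" using b by simp
      moreover have "y \<in> tuples n" using b j unfolding y by (auto simp: tuples_def)
      ultimately show "y \<in> ?O" by simp
    qed
    show "?O \<subseteq> ?f ` ?Z"
    proof
      fix b assume b: "b \<in> ?O"
      have "dot n (?f b) c = dot n b c + 1" by (rule dot_flip[of j0 n c, OF j c])
      then have "dot n (?f b) c = 0" using b by simp
      moreover have "?f b \<in> tuples n" using b j by (auto simp: tuples_def)
      ultimately have "?f b \<in> ?Z" by simp
      show "b \<in> ?f ` ?Z"
      proof (rule image_eqI)
        show "b = ?f (?f b)" by (rule inv[symmetric])
      qed fact
    qed
  qed
  have "inj_on ?f ?Z" by (rule inj_on_inverseI[where g="?f"]) (rule inv)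
  then have "card ?O = card ?Z" using img card_image by fastforce
  moreover have "tuples n = ?Z \<union> ?O" by auto
  moreover have "?Z \<inter> ?O = {}" by auto
  ultimately show ?thesis using card_Un_disjoint[OF fin] by simp
qed

lemma count_kill:
  assumes j: "j0 < n" and c: "c j0 = 1"
  shows "real (card {B \<in> blocks n m. \<forall>k<m. dot n (B k) c = 0}) * 2 ^ m = real (card (blocks n m))"
proof -
  let ?A = "{b \<in> tuples n. dot n b c = 0}"
  have e: "{B \<in> blocks n m. \<forall>k<m. dot n (B k) c = 0} = {B \<in> blocks n m. \<forall>k<m. B k \<in> ?A}"
    unfolding blocks_def by blast
  have "real (card {B \<in> blocks n m. \<forall>k<m. B k \<in> ?A})
        = (\<Sum>B\<in>{B \<in> blocks n m. \<forall>k<m. B k \<in> ?A}. \<Prod>k<m. (1::real))"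
    by simp
  also have "\<dots> = (\<Prod>k<m. \<Sum>b\<in>?A. (1::real))"
    by (rule block_sum_prod) auto
  also have "\<dots> = real (card ?A) ^ m" by simp
  finally have 1: "real (card {B \<in> blocks n m. \<forall>k<m. dot n (B k) c = 0}) = real (card ?A) ^ m"
    unfolding e .
  have "real (card (blocks n m)) = (\<Sum>B\<in>blocks n m. \<Prod>k<m. (1::real))" by simp
  also have "\<dots> = real (card (tuples n)) ^ m" by (subst block_sum_prod_all) simp
  finally have 2: "real (card (blocks n m)) = real (card (tuples n)) ^ m" .
  have 3: "real (card (tuples n)) = 2 * real (card ?A)"
  proof -
    have "card (tuples n) = 2 * card ?A" using half_count[of j0 n c, OF j c] by simp
    then show ?thesis by simp
  qed
  have "real (card (tuples n)) ^ m = real (card ?A) ^ m * 2 ^ m"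
    unfolding 3 by (simp add: power_mult_distrib mult.commute)
  then show ?thesis using 1 2 by simp
qed




lemma P_nonneg: "is_joint_dist r p \<Longrightarrow> 0 \<le> block_prob p n x"
  unfolding block_prob_def is_joint_dist_def by (auto intro: prod_nonneg)

lemma sum_P: "is_joint_dist r p \<Longrightarrow> (\<Sum>x\<in>blocks r n. block_prob p n x) = 1"
  unfolding block_prob_def using block_sum_prod_all[where f=p and r=r and n=n]
  by (simp add: is_joint_dist_def)

lemma sum_P_powr: "is_joint_dist r p \<Longrightarrow>
   (\<Sum>x\<in>blocks r n. block_prob p n x powr s) = (\<Sum>v\<in>tuples r. p v powr s) ^ n"
proof -
  assume jd: "is_joint_dist r p"
  have "(\<Sum>x\<in>blocks r n. block_prob p n x powr s) = (\<Sum>x\<in>blocks r n. \<Prod>t<n. p (x t) powr s)"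
    unfolding block_prob_def
    by (intro sum.cong refl prod_powr_distrib)
  also have "\<dots> = (\<Sum>v\<in>tuples r. p v powr s) ^ n" by (rule block_sum_prod_all)
  finally show ?thesis .
qed

definition ml :: "nat \<Rightarrow> (tuple \<Rightarrow> real) \<Rightarrow> nat \<Rightarrow> nat \<Rightarrow> (nat \<Rightarrow> nat \<Rightarrow> bit)
   \<Rightarrow> (nat \<Rightarrow> nat \<Rightarrow> bit) \<Rightarrow> (nat \<Rightarrow> tuple)" where
  "ml r p m n B y = (SOME x. x \<in> blocks r n \<and> encode r m n B x = y \<and>
      (\<forall>x'\<in>blocks r n. encode r m n B x' = y \<longrightarrow> block_prob p n x' \<le> block_prob p n x))"

lemma ml_spec:
  assumes x: "x \<in> blocks r n"
  shows "ml r p m n B (encode r m n B x) \<in> blocks r n \<and>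
     encode r m n B (ml r p m n B (encode r m n B x)) = encode r m n B x \<and>
     block_prob p n x \<le> block_prob p n (ml r p m n B (encode r m n B x))"
proof -
  let ?C = "{x' \<in> blocks r n. encode r m n B x' = encode r m n B x}"
  have fC: "finite ?C" by simp
  have xC: "x \<in> ?C" using x by simp
  have "Max (block_prob p n ` ?C) \<in> block_prob p n ` ?C"
    using fC xC by (intro Max_in) auto
  then obtain w where w: "w \<in> ?C" and wM: "block_prob p n w = Max (block_prob p n ` ?C)" by auto
  have "\<forall>x'\<in>?C. block_prob p n x' \<le> block_prob p n w" using fC wM by auto
  then have ex: "\<exists>z. z \<in> blocks r n \<and> encode r m n B z = encode r m n B x \<and>
      (\<forall>x'\<in>blocks r n. encode r m n B x' = encode r m n B x \<longrightarrow> block_prob p n x' \<le> block_prob p n z)"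
    using w by blast
  have "ml r p m n B (encode r m n B x) \<in> blocks r n \<and> encode r m n B (ml r p m n B (encode r m n B x)) = encode r m n B x \<and>
      (\<forall>x'\<in>blocks r n. encode r m n B x' = encode r m n B x \<longrightarrow> block_prob p n x' \<le> block_prob p n (ml r p m n B (encode r m n B x)))"
    unfolding ml_def by (rule someI_ex[OF ex])
  then show ?thesis using x by blast
qed

lemma diff_exists:
  assumes x: "x \<in> blocks r n" and x': "x' \<in> blocks r n" and ne: "x' \<noteq> x"
  shows "\<exists>t<n. \<exists>i<r. x' t i \<noteq> x t i"
proof -
  obtain t i where d: "x' t i \<noteq> x t i" using ne by (meson ext)
  have "t < n"
  proof (rule ccontr)
    assume "\<not> t < n" then show False using x x' d by (auto simp: blocks_def)
  qed
  moreover have "i < r"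
  proof (rule ccontr)
    assume "\<not> i < r" then show False using x x' d \<open>t < n\<close> by (auto simp: blocks_def tuples_def)
  qed
  ultimately show ?thesis using d by blast
qed

lemma bit_add_ne: "(a::bit) \<noteq> b \<Longrightarrow> a + b = 1"
  using bit_cases2[of a] bit_cases2[of b] by auto

lemma bad_count:
  assumes x: "x \<in> blocks r n" and x': "x' \<in> blocks r n" and ne: "x' \<noteq> x"
  shows "real (card {B \<in> blocks n m. encode r m n B x' = encode r m n B x}) * 2 ^ m
          \<le> real (card (blocks n m))"
proof -
  obtain t i where t: "t < n" and i: "i < r" and d: "x' t i \<noteq> x t i"
    using diff_exists[OF x x' ne] by blast
  define c where "c = (\<lambda>j. x' j i + x j i)"
  have c1: "c t = 1" unfolding c_def using d by (rule bit_add_ne)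
  have sub: "{B \<in> blocks n m. encode r m n B x' = encode r m n B x}
           \<subseteq> {B \<in> blocks n m. \<forall>k<m. dot n (B k) c = 0}"
  proof (safe)
    fix B k assume B: "B \<in> blocks n m" and e: "encode r m n B x' = encode r m n B x" and k: "k < m"
    have "encode r m n B x' i k = encode r m n B x i k" using e by simp
    then have s: "(\<Sum>j<n. B k j * x' j i) = (\<Sum>j<n. B k j * x j i)"
      using i k by (simp add: encode_def)
    have "dot n (B k) c = (\<Sum>j<n. B k j * x' j i) + (\<Sum>j<n. B k j * x j i)"
      unfolding dot_def c_def distrib_left sum.distrib by (rule refl)
    also have "\<dots> = (\<Sum>j<n. B k j * x j i) + (\<Sum>j<n. B k j * x j i)" by (simp only: s)
    also have "\<dots> = 0" by (rule bit_plus_self)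
    finally show "dot n (B k) c = 0" .
  qed
  have "card {B \<in> blocks n m. encode r m n B x' = encode r m n B x}
        \<le> card {B \<in> blocks n m. \<forall>k<m. dot n (B k) c = 0}"
    by (rule card_mono[OF _ sub]) simp
  then have "real (card {B \<in> blocks n m. encode r m n B x' = encode r m n B x}) * 2 ^ m
        \<le> real (card {B \<in> blocks n m. \<forall>k<m. dot n (B k) c = 0}) * 2 ^ m"
    by simp
  also have "\<dots> = real (card (blocks n m))" by (rule count_kill[of t n c m, OF t c1])
  finally show ?thesis .
qed



lemma sum_if_const: "finite A \<Longrightarrow> (\<Sum>x\<in>A. if Q x then (a::real) else 0) = real (card {x\<in>A. Q x}) * a"
  by (simp add: sum.inter_filter[symmetric])

lemma min_powr:
  fixes a b t :: real
  assumes a: "0 < a" and b: "0 < b" and t: "0 \<le> t" "t \<le> 1"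
  shows "min a b \<le> a powr (1 - t) * b powr t"
proof (cases "a \<le> b")
  case True
  have "a powr (1 - t) * a powr t = a powr (1 - t + t)" by (rule powr_add[symmetric])
  then have "a = a powr (1 - t) * a powr t" using a by simp
  also have "\<dots> \<le> a powr (1 - t) * b powr t"
    using True a t by (intro mult_left_mono powr_mono2) auto
  finally show ?thesis using True by simp
next
  case False
  have "b powr (1 - t) * b powr t = b powr (1 - t + t)" by (rule powr_add[symmetric])
  then have "b = b powr (1 - t) * b powr t" using b by simp
  also have "\<dots> \<le> a powr (1 - t) * b powr t"
    using False b t by (intro mult_right_mono powr_mono2) auto
  finally show ?thesis using False by simp
qed

lemma per_x_bound:
  assumes jd: "is_joint_dist r q" and x: "x \<in> blocks r n" and t: "0 < t" "t < 1"
  shows "block_prob q n x * real (card {B \<in> blocks n m. ml r q m n B (encode r m n B x) \<noteq> x})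
     \<le> real (card (blocks n m)) * (block_prob q n x powr (1 - t) * 2 powr (- t * m))"
proof -
  let ?F = "{B \<in> blocks n m. ml r q m n B (encode r m n B x) \<noteq> x}"
  let ?N = "real (card (blocks n m))"
  let ?W = "{x' \<in> blocks r n. x' \<noteq> x \<and> block_prob q n x \<le> block_prob q n x'}"
  let ?Bad = "\<lambda>x'. {B \<in> blocks n m. encode r m n B x' = encode r m n B x}"
  let ?px = "block_prob q n x"
  have px0: "0 \<le> ?px" by (rule P_nonneg[OF jd])
  show ?thesis
  proof (cases "?px = 0")
    case True then show ?thesis by simp
  next
    case False
    then have pxp: "0 < ?px" using px0 by simp
    have a: "real (card ?F) \<le> ?N" by (simp add: card_mono)
    have sub: "?F \<subseteq> (\<Union>x'\<in>?W. ?Bad x')"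
    proof
      fix B assume B: "B \<in> ?F"
      let ?z = "ml r q m n B (encode r m n B x)"
      have z: "?z \<in> blocks r n \<and> encode r m n B ?z = encode r m n B x \<and> ?px \<le> block_prob q n ?z"
        by (rule ml_spec[OF x])
      then have "?z \<in> ?W" using B by auto
      moreover have "B \<in> ?Bad ?z" using z B by auto
      ultimately show "B \<in> (\<Union>x'\<in>?W. ?Bad x')" by blast
    qed
    have "card ?F \<le> card (\<Union>x'\<in>?W. ?Bad x')" by (rule card_mono[OF _ sub]) auto
    also have "\<dots> \<le> (\<Sum>x'\<in>?W. card (?Bad x'))" by (rule card_UN_le) simp
    finally have "real (card ?F) \<le> real (\<Sum>x'\<in>?W. card (?Bad x'))"
      by (rule of_nat_mono)
    then have "real (card ?F) \<le> (\<Sum>x'\<in>?W. real (card (?Bad x')))"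
      by (simp only: of_nat_sum)
    then have "real (card ?F) * 2 ^ m \<le> (\<Sum>x'\<in>?W. real (card (?Bad x'))) * 2 ^ m"
      by (rule mult_right_mono) simp
    also have "\<dots> = (\<Sum>x'\<in>?W. real (card (?Bad x')) * 2 ^ m)"
      by (rule sum_distrib_right)
    also have "\<dots> \<le> (\<Sum>x'\<in>?W. ?N)"
      by (intro sum_mono bad_count[OF x]) auto
    also have "\<dots> = real (card ?W) * ?N" by simp
    finally have b: "real (card ?F) * 2 ^ m \<le> real (card ?W) * ?N" .
    have "real (card ?W) * ?px = (\<Sum>x'\<in>?W. ?px)" by simp
    also have "\<dots> \<le> (\<Sum>x'\<in>?W. block_prob q n x')" by (intro sum_mono) auto
    also have "\<dots> \<le> (\<Sum>x'\<in>blocks r n. block_prob q n x')"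
      by (intro sum_mono2) (auto intro: P_nonneg[OF jd])
    also have "\<dots> = 1" by (rule sum_P[OF jd])
    finally have c: "real (card ?W) * ?px \<le> 1" .
    have "?px * real (card ?F) * 2 ^ m \<le> ?px * (real (card ?W) * ?N)"
      using b pxp by (simp add: mult.assoc)
    also have "\<dots> = (real (card ?W) * ?px) * ?N" by simp
    also have "\<dots> \<le> 1 * ?N" using c by (intro mult_right_mono) auto
    finally have d: "?px * real (card ?F) \<le> ?N * (1 / 2 ^ m)" by (simp add: field_simps)
    have e: "?px * real (card ?F) \<le> ?N * ?px" using a pxp by (simp add: mult.commute)
    have Np: "0 < ?N" using card_blocks_pos by simp
    have "?px * real (card ?F) \<le> ?N * min ?px (1 / 2 ^ m)" using d e by (simp add: min_def)
    also have "\<dots> \<le> ?N * (?px powr (1 - t) * (1 / 2 ^ m) powr t)"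
      using Np pxp t by (intro mult_left_mono min_powr) auto
    also have "(1 / 2 ^ m) powr t = (2::real) powr (- (real m * t))"
      by (simp add: powr_realpow[symmetric] powr_powr powr_minus_divide[symmetric] powr_divide)
    also have "(2::real) powr (- (real m * t)) = 2 powr (- t * m)"
      by (metis minus_mult_left mult.commute)
    finally show ?thesis .
  qed
qed



definition Zf :: "nat \<Rightarrow> (tuple \<Rightarrow> real) \<Rightarrow> real \<Rightarrow> real" where
  "Zf r p u = (\<Sum>v\<in>tuples r. p v powr u)"

definition Hfull :: "nat \<Rightarrow> (tuple \<Rightarrow> real) \<Rightarrow> real" where
  "Hfull r p = - (\<Sum>v\<in>tuples r. if p v = 0 then 0 else p v * log 2 (p v))"

lemma avg_err:
  assumes jd: "is_joint_dist r q" and t: "0 < t" "t < 1"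
  shows "(\<Sum>B\<in>blocks n m. err_prob r q m n B (ml r q m n B))
     \<le> real (card (blocks n m)) * (2 powr (- t * m) * Zf r q (1 - t) ^ n)"
proof -
  let ?N = "real (card (blocks n m))"
  have "(\<Sum>B\<in>blocks n m. err_prob r q m n B (ml r q m n B))
     = (\<Sum>B\<in>blocks n m. \<Sum>x\<in>blocks r n. if ml r q m n B (encode r m n B x) \<noteq> x then block_prob q n x else 0)"
    unfolding err_prob_def by (rule refl)
  also have "\<dots> = (\<Sum>x\<in>blocks r n. \<Sum>B\<in>blocks n m. if ml r q m n B (encode r m n B x) \<noteq> x then block_prob q n x else 0)"
    by (rule sum.swap)
  also have "\<dots> = (\<Sum>x\<in>blocks r n. block_prob q n x * real (card {B \<in> blocks n m. ml r q m n B (encode r m n B x) \<noteq> x}))"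
    by (intro sum.cong refl) (simp add: sum_if_const mult.commute)
  also have "\<dots> \<le> (\<Sum>x\<in>blocks r n. ?N * (block_prob q n x powr (1 - t) * 2 powr (- t * m)))"
    by (intro sum_mono per_x_bound[OF jd _ t])
  also have "\<dots> = ?N * 2 powr (- t * m) * (\<Sum>x\<in>blocks r n. block_prob q n x powr (1 - t))"
    by (simp add: sum_distrib_left mult_ac)
  also have "(\<Sum>x\<in>blocks r n. block_prob q n x powr (1 - t)) = Zf r q (1 - t) ^ n"
    unfolding Zf_def by (rule sum_P_powr[OF jd])
  finally show ?thesis by (simp add: mult_ac)
qed

lemma Zf_deriv:
  assumes jd: "is_joint_dist r p"
  shows "(Zf r p has_real_derivative (\<Sum>v\<in>tuples r. if p v = 0 then 0 else p v * ln (p v))) (at 1)"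
proof -
  have eq: "Zf r p = (\<lambda>u. \<Sum>v\<in>tuples r. if p v = 0 then 0 else exp (u * ln (p v)))"
    by (simp add: Zf_def powr_def fun_eq_iff)
  show ?thesis
    unfolding eq
  proof (rule DERIV_sum)
    fix v assume v: "v \<in> tuples r"
    show "((\<lambda>u. if p v = 0 then 0 else exp (u * ln (p v))) has_real_derivative
          (if p v = 0 then 0 else p v * ln (p v))) (at 1)"
    proof (cases "p v = 0")
      case True then show ?thesis by simp
    next
      case False
      then have pp: "0 < p v" using jd by (auto simp: is_joint_dist_def order_le_less)
      have "((\<lambda>u. exp (u * ln (p v))) has_real_derivative exp (1 * ln (p v)) * (1 * ln (p v))) (at 1)"
        by (rule DERIV_chain2[OF DERIV_exp], rule DERIV_cmult_right, rule DERIV_ident)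
      then show ?thesis using False pp by simp
    qed
  qed
qed

lemma deriv_right:
  assumes der: "(f has_real_derivative D) (at x)" and Dc: "D < c"
  shows "\<exists>t. 0 < t \<and> t < 1 \<and> f (x + t) < f x + t * c"
proof -
  from der have lim: "((\<lambda>y. (f y - f x) / (y - x)) \<longlongrightarrow> D) (at x)"
    by (simp add: has_field_derivative_iff)
  have "eventually (\<lambda>y. (f y - f x) / (y - x) < c) (at x)"
    using order_tendstoD(2)[OF lim Dc] .
  then obtain d where d: "d > 0" and dd: "\<And>y. y \<noteq> x \<Longrightarrow> dist y x < d \<Longrightarrow> (f y - f x) / (y - x) < c"
    unfolding eventually_at by auto
  define t where "t = min (d/2) (1/2)"
  have t: "0 < t" "t < 1" "t < d" using d by (auto simp: t_def)
  have "(f (x + t) - f x) / (x + t - x) < c"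
    using t by (intro dd) (auto simp: dist_real_def)
  then have "f (x + t) - f x < c * t" using t by (simp add: pos_divide_less_eq)
  then show ?thesis using t by (intro exI[of _ t]) (auto simp: mult.commute)
qed

lemma deriv_left:
  assumes der: "(f has_real_derivative D) (at x)" and Dc: "- c < D"
  shows "\<exists>t. 0 < t \<and> t < 1 \<and> f (x - t) < f x + t * c"
proof -
  from der have lim: "((\<lambda>y. (f y - f x) / (y - x)) \<longlongrightarrow> D) (at x)"
    by (simp add: has_field_derivative_iff)
  have "eventually (\<lambda>y. - c < (f y - f x) / (y - x)) (at x)"
    using order_tendstoD(1)[OF lim Dc] .
  then obtain d where d: "d > 0" and dd: "\<And>y. y \<noteq> x \<Longrightarrow> dist y x < d \<Longrightarrow> - c < (f y - f x) / (y - x)"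
    unfolding eventually_at by auto
  define t where "t = min (d/2) (1/2)"
  have t: "0 < t" "t < 1" "t < d" using d by (auto simp: t_def)
  have "- c < (f (x - t) - f x) / (x - t - x)"
    using t by (intro dd) (auto simp: dist_real_def)
  then have "(f (x - t) - f x) / t < c" by simp
  then have "f (x - t) - f x < c * t" using t by (simp add: pos_divide_less_eq)
  then show ?thesis using t by (intro exI[of _ t]) (auto simp: mult.commute)
qed

lemma Zf_one: "is_joint_dist r p \<Longrightarrow> Zf r p 1 = 1"
  unfolding Zf_def is_joint_dist_def by simp

lemma D_eq: "(\<Sum>v\<in>tuples r. if p v = 0 then 0 else p v * ln (p v)) = - (Hfull r p * ln 2)"
proof -
  have "(\<Sum>v\<in>tuples r. if p v = 0 then 0 else p v * (ln (p v) / ln 2)) * ln 2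
      = (\<Sum>v\<in>tuples r. (if p v = 0 then 0 else p v * (ln (p v) / ln 2)) * ln 2)"
    by (rule sum_distrib_right)
  also have "\<dots> = (\<Sum>v\<in>tuples r. if p v = 0 then 0 else p v * ln (p v))"
    by (intro sum.cong) auto
  finally show ?thesis unfolding Hfull_def log_def by simp
qed

lemma exists_t_ach:
  assumes jd: "is_joint_dist r p" and R: "Hfull r p < R"
  shows "\<exists>t. 0 < t \<and> t < 1 \<and> Zf r p (1 - t) * 2 powr (- t * R) < 1"
proof -
  have "- (R * ln 2) < - (Hfull r p * ln 2)" using R by simp
  then obtain t where t: "0 < t" "t < 1" and lt: "Zf r p (1 - t) < Zf r p 1 + t * (R * ln 2)"
    using deriv_left[OF Zf_deriv[OF jd], of "R * ln 2"] D_eq by auto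
  have "Zf r p (1 - t) < 1 + t * R * ln 2" using lt Zf_one[OF jd] by (simp add: mult_ac)
  also have "\<dots> \<le> exp (t * R * ln 2)" by (rule exp_ge_add_one_self)
  also have "\<dots> = 2 powr (t * R)" by (simp add: powr_def mult_ac)
  finally have "Zf r p (1 - t) < 2 powr (t * R)" .
  then have "Zf r p (1 - t) * 2 powr (- t * R) < 2 powr (t * R) * 2 powr (- t * R)"
    by (intro mult_strict_right_mono) auto
  also have "\<dots> = 1" by (simp add: powr_add[symmetric])
  finally show ?thesis using t by blast
qed

lemma exists_t_conv:
  assumes jd: "is_joint_dist r p" and R: "R < Hfull r p"
  shows "\<exists>t. 0 < t \<and> t < 1 \<and> Zf r p (1 + t) * 2 powr (t * R) < 1"
proof -
  have "- (Hfull r p * ln 2) < - (R * ln 2)" using R by simp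
  then obtain t where t: "0 < t" "t < 1" and lt: "Zf r p (1 + t) < Zf r p 1 + t * (- (R * ln 2))"
    using deriv_right[OF Zf_deriv[OF jd], of "- (R * ln 2)"] D_eq by auto
  have "Zf r p (1 + t) < 1 + (- t * R * ln 2)" using lt Zf_one[OF jd] by (simp add: mult_ac)
  also have "\<dots> \<le> exp (- t * R * ln 2)" by (rule exp_ge_add_one_self)
  also have "\<dots> = 2 powr (- t * R)" by (simp add: powr_def mult_ac)
  finally have "Zf r p (1 + t) < 2 powr (- t * R)" .
  then have "Zf r p (1 + t) * 2 powr (t * R) < 2 powr (- t * R) * 2 powr (t * R)"
    by (intro mult_strict_right_mono) auto
  also have "\<dots> = 1" by (simp add: powr_add[symmetric])
  finally show ?thesis using t by blast
qed



lemma p_le_1: "is_joint_dist r p \<Longrightarrow> p v \<le> 1"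
proof -
  assume jd: "is_joint_dist r p"
  show "p v \<le> 1"
  proof (cases "v \<in> tuples r")
    case True
    have "p v \<le> (\<Sum>v\<in>tuples r. p v)"
      using jd True by (intro member_le_sum) (auto simp: is_joint_dist_def)
    then show ?thesis using jd by (simp add: is_joint_dist_def)
  next
    case False then show ?thesis using jd by (simp add: is_joint_dist_def)
  qed
qed

lemma Hfull_nonneg: "is_joint_dist r p \<Longrightarrow> 0 \<le> Hfull r p"
proof -
  assume jd: "is_joint_dist r p"
  have "(\<Sum>v\<in>tuples r. if p v = 0 then 0 else p v * log 2 (p v)) \<le> 0"
  proof (rule sum_nonpos)
    fix v assume "v \<in> tuples r"
    show "(if p v = 0 then 0 else p v * log 2 (p v)) \<le> 0"
    proof (cases "p v = 0")
      case False
      then have "0 < p v" using jd by (auto simp: is_joint_dist_def order_le_less)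
      moreover have "log 2 (p v) \<le> 0" using \<open>0 < p v\<close> p_le_1[OF jd, of v] by simp
      ultimately show ?thesis by (simp add: mult_nonneg_nonpos)
    qed simp
  qed
  then show ?thesis unfolding Hfull_def by simp
qed

lemma Zf_nonneg: "0 \<le> Zf r p u" unfolding Zf_def by (intro sum_nonneg) simp

lemma avg_exists:
  fixes f :: "'a \<Rightarrow> real"
  assumes "finite A" "A \<noteq> {}" "(\<Sum>a\<in>A. f a) \<le> real (card A) * c"
  shows "\<exists>a\<in>A. f a \<le> c"
proof (rule ccontr)
  assume "\<not> (\<exists>a\<in>A. f a \<le> c)"
  then have "\<And>a. a \<in> A \<Longrightarrow> c < f a" by auto
  then have "(\<Sum>a\<in>A. c) < (\<Sum>a\<in>A. f a)" using assms by (intro sum_strict_mono) auto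
  then show False using assms by simp
qed

lemma ach_core:
  assumes jd: "is_joint_dist r q" and R: "Hfull r q < R"
  shows "\<exists>\<rho>. 0 \<le> \<rho> \<and> \<rho> < 1 \<and> (\<forall>n. (\<Sum>B\<in>blocks n (nat \<lceil>real n * R\<rceil>).
      err_prob r q (nat \<lceil>real n * R\<rceil>) n B (ml r q (nat \<lceil>real n * R\<rceil>) n B))
      \<le> real (card (blocks n (nat \<lceil>real n * R\<rceil>))) * \<rho> ^ n)"
proof -
  obtain t where t: "0 < t" "t < 1" and lt: "Zf r q (1 - t) * 2 powr (- t * R) < 1"
    using exists_t_ach[OF jd R] by blast
  define \<rho> where "\<rho> = Zf r q (1 - t) * 2 powr (- t * R)"
  have r0: "0 \<le> \<rho>" unfolding \<rho>_def using Zf_nonneg by simp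
  have "(\<Sum>B\<in>blocks n (nat \<lceil>real n * R\<rceil>).
      err_prob r q (nat \<lceil>real n * R\<rceil>) n B (ml r q (nat \<lceil>real n * R\<rceil>) n B))
      \<le> real (card (blocks n (nat \<lceil>real n * R\<rceil>))) * \<rho> ^ n" for n
  proof -
    let ?m = "nat \<lceil>real n * R\<rceil>"
    have mge: "real n * R \<le> real ?m" by linarith
    have "2 powr (- t * ?m) \<le> (2::real) powr (- t * R * n)"
      using mge t by (intro powr_mono) (auto simp: mult_ac)
    also have "\<dots> = (2 powr (- t * R)) ^ n" by (simp add: powr_power mult_ac)
    finally have pw: "2 powr (- t * ?m) \<le> (2 powr (- t * R)) ^ n" .
    have "(\<Sum>B\<in>blocks n ?m. err_prob r q ?m n B (ml r q ?m n B))
       \<le> real (card (blocks n ?m)) * (2 powr (- t * ?m) * Zf r q (1 - t) ^ n)"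
      by (rule avg_err[OF jd t])
    also have "\<dots> \<le> real (card (blocks n ?m)) * ((2 powr (- t * R)) ^ n * Zf r q (1 - t) ^ n)"
      using pw Zf_nonneg by (intro mult_left_mono mult_right_mono) auto
    also have "\<dots> = real (card (blocks n ?m)) * \<rho> ^ n"
      unfolding \<rho>_def by (simp add: power_mult_distrib mult_ac)
    finally show ?thesis .
  qed
  then show ?thesis using r0 lt unfolding \<rho>_def by blast
qed

lemma pow_eventually:
  assumes "0 \<le> (\<rho>::real)" "\<rho> < 1" "0 < \<epsilon>"
  shows "\<exists>N. \<forall>n\<ge>N. \<rho> ^ n \<le> \<epsilon>"
proof -
  have "(\<lambda>n. \<rho> ^ n) \<longlonglongrightarrow> 0" using assms by (intro LIMSEQ_power_zero) simp
  then have "eventually (\<lambda>n. \<rho> ^ n < \<epsilon>) sequentially" using assms(3) by (rule order_tendstoD)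
  then show ?thesis unfolding eventually_sequentially by (meson less_imp_le)
qed

lemma achievable_Hfull:
  assumes jd: "is_joint_dist r p" and R: "Hfull r p < R"
  shows "achievable_sc r p R"
proof -
  obtain \<rho> where r: "0 \<le> \<rho>" "\<rho> < 1" and bd: "\<And>n. (\<Sum>B\<in>blocks n (nat \<lceil>real n * R\<rceil>).
      err_prob r p (nat \<lceil>real n * R\<rceil>) n B (ml r p (nat \<lceil>real n * R\<rceil>) n B))
      \<le> real (card (blocks n (nat \<lceil>real n * R\<rceil>))) * \<rho> ^ n"
    using ach_core[OF jd R] by blast
  have R0: "0 \<le> R" using Hfull_nonneg[OF jd] R by simp
  show ?thesis unfolding achievable_sc_def
  proof (intro conjI allI impI R0)
    fix \<epsilon> :: real assume e: "0 < \<epsilon>"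
    obtain N where N: "\<And>n. n \<ge> N \<Longrightarrow> \<rho> ^ n \<le> \<epsilon>" using pow_eventually[OF r e] by blast
    show "\<exists>N. \<forall>n\<ge>N. \<exists>B g. err_prob r p (nat \<lceil>real n * R\<rceil>) n B g \<le> \<epsilon>"
    proof (rule exI[of _ N], intro allI impI)
      fix n assume n: "N \<le> n"
      obtain B where "err_prob r p (nat \<lceil>real n * R\<rceil>) n B (ml r p (nat \<lceil>real n * R\<rceil>) n B) \<le> \<rho> ^ n"
        using avg_exists[OF fin_blocks _ bd[of n]] zero_block by blast
      then have "err_prob r p (nat \<lceil>real n * R\<rceil>) n B (ml r p (nat \<lceil>real n * R\<rceil>) n B) \<le> \<epsilon>"
        using N[OF n] by linarith
      then show "\<exists>B g. err_prob r p (nat \<lceil>real n * R\<rceil>) n B g \<le> \<epsilon>" by blast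
    qed
  qed
qed



lemma restr_tuples: "v \<in> tuples r \<Longrightarrow> restr S v \<in> tuples r"
  by (simp add: tuples_def restr_def)

lemma restr_zero[simp]: "restr S (\<lambda>_. 0) = (\<lambda>_. 0)"
  by (simp add: restr_def fun_eq_iff)

lemma marg_jd:
  assumes jd: "is_joint_dist r p"
  shows "is_joint_dist r (marg r p S)"
proof -
  have nn: "0 \<le> marg r p S u" for u
    unfolding marg_def using jd by (intro sum_nonneg) (auto simp: is_joint_dist_def)
  have out: "marg r p S u = 0" if "u \<notin> tuples r" for u
  proof -
    have e: "{v \<in> tuples r. restr S v = u} = {}" using that restr_tuples by blast
    show ?thesis unfolding marg_def e by simp
  qed
  have "(\<Sum>u\<in>tuples r. marg r p S u) = (\<Sum>v\<in>tuples r. p v)"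
    unfolding marg_def by (rule sum.group) (auto intro: restr_tuples)
  then show ?thesis using nn out jd by (simp add: is_joint_dist_def)
qed

lemma block_marg:
  assumes w: "w \<in> blocks r n"
  shows "(\<Sum>x\<in>{x \<in> blocks r n. (\<lambda>t. restr S (x t)) = w}. block_prob p n x)
        = block_prob (marg r p S) n w"
proof -
  let ?A = "\<lambda>t. {v \<in> tuples r. restr S v = w t}"
  have eq: "{x \<in> blocks r n. (\<lambda>t. restr S (x t)) = w} = {x \<in> blocks r n. \<forall>t<n. x t \<in> ?A t}"
  proof (intro set_eqI iffI)
    fix x assume "x \<in> {x \<in> blocks r n. (\<lambda>t. restr S (x t)) = w}"
    then show "x \<in> {x \<in> blocks r n. \<forall>t<n. x t \<in> ?A t}" by (auto simp: blocks_def)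
  next
    fix x assume x: "x \<in> {x \<in> blocks r n. \<forall>t<n. x t \<in> ?A t}"
    have "(\<lambda>t. restr S (x t)) = w"
    proof
      fix t show "restr S (x t) = w t"
        using x w by (cases "t < n") (auto simp: blocks_def)
    qed
    then show "x \<in> {x \<in> blocks r n. (\<lambda>t. restr S (x t)) = w}" using x by simp
  qed
  show ?thesis unfolding eq block_prob_def
    by (subst block_sum_prod) (auto simp: marg_def)
qed

lemma restr_block: "x \<in> blocks r n \<Longrightarrow> (\<lambda>t. restr S (x t)) \<in> blocks r n"
  by (auto simp: blocks_def restr_tuples)

lemma block_marg_sum:
  "(\<Sum>x\<in>blocks r n. block_prob p n x * h (\<lambda>t. restr S (x t)))
   = (\<Sum>w\<in>blocks r n. block_prob (marg r p S) n w * h w)"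
proof -
  have "(\<Sum>x\<in>blocks r n. block_prob p n x * h (\<lambda>t. restr S (x t)))
      = (\<Sum>w\<in>blocks r n. \<Sum>x\<in>{x \<in> blocks r n. (\<lambda>t. restr S (x t)) = w}. block_prob p n x * h (\<lambda>t. restr S (x t)))"
    by (rule sum.group[symmetric]) (auto intro: restr_block)
  also have "\<dots> = (\<Sum>w\<in>blocks r n. \<Sum>x\<in>{x \<in> blocks r n. (\<lambda>t. restr S (x t)) = w}. block_prob p n x * h w)"
    by (intro sum.cong refl) auto
  also have "\<dots> = (\<Sum>w\<in>blocks r n. block_prob (marg r p S) n w * h w)"
    by (intro sum.cong refl) (simp add: sum_distrib_right[symmetric] block_marg)
  finally show ?thesis .
qed

definition mask :: "nat \<Rightarrow> (nat \<Rightarrow> nat \<Rightarrow> bit) \<Rightarrow> (nat \<Rightarrow> nat \<Rightarrow> bit)" where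
  "mask i y = (\<lambda>i' k. if i' = i then y i' k else 0)"

definition gcomb where
  "gcomb r p m n B y = (\<lambda>j i'. if i' < r then ml r (marg r p {i'}) m n B (mask i' y) j i' else 0)"

lemma enc_restr:
  assumes i: "i < r"
  shows "encode r m n B (\<lambda>t. restr {i} (x t)) = mask i (encode r m n B x)"
proof (intro ext)
  fix i' k
  show "encode r m n B (\<lambda>t. restr {i} (x t)) i' k = mask i (encode r m n B x) i' k"
  proof (cases "i' = i")
    case True then show ?thesis by (simp add: encode_def mask_def restr_def)
  next
    case False then show ?thesis by (simp add: encode_def mask_def restr_def)
  qed
qed

lemma comb_ok:
  assumes x: "x \<in> blocks r n"
    and ok: "\<And>i. i < r \<Longrightarrow> ml r (marg r p {i}) m n B (encode r m n B (\<lambda>t. restr {i} (x t))) = (\<lambda>t. restr {i} (x t))"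
  shows "gcomb r p m n B (encode r m n B x) = x"
proof (intro ext)
  fix j i'
  show "gcomb r p m n B (encode r m n B x) j i' = x j i'"
  proof (cases "i' < r")
    case True
    have "gcomb r p m n B (encode r m n B x) j i' = ml r (marg r p {i'}) m n B (encode r m n B (\<lambda>t. restr {i'} (x t))) j i'"
      using True by (simp add: gcomb_def enc_restr)
    also have "\<dots> = x j i'" using ok[OF True] by (simp add: restr_def)
    finally show ?thesis .
  next
    case False then show ?thesis using x by (cases "j < n") (auto simp: gcomb_def blocks_def tuples_def)
  qed
qed

lemma comb_err:
  assumes jd: "is_joint_dist r p"
  shows "err_prob r p m n B (gcomb r p m n B)
     \<le> (\<Sum>i<r. err_prob r (marg r p {i}) m n B (ml r (marg r p {i}) m n B))"
proof -
  define h where "h i w = (if ml r (marg r p {i}) m n B (encode r m n B w) \<noteq> w then 1 else (0::real))" for i w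
  have pt: "(if gcomb r p m n B (encode r m n B x) \<noteq> x then block_prob p n x else 0)
        \<le> (\<Sum>i<r. block_prob p n x * h i (\<lambda>t. restr {i} (x t)))" if x: "x \<in> blocks r n" for x
  proof (cases "gcomb r p m n B (encode r m n B x) \<noteq> x")
    case True
    then obtain i where i: "i < r" and f: "ml r (marg r p {i}) m n B (encode r m n B (\<lambda>t. restr {i} (x t))) \<noteq> (\<lambda>t. restr {i} (x t))"
      using comb_ok[OF x] by blast
    have "block_prob p n x = block_prob p n x * h i (\<lambda>t. restr {i} (x t))" using f by (simp add: h_def)
    also have "\<dots> \<le> (\<Sum>i<r. block_prob p n x * h i (\<lambda>t. restr {i} (x t)))"
      using i P_nonneg[OF jd] by (intro member_le_sum) (auto simp: h_def)
    finally show ?thesis using True by simp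
  next
    case False then show ?thesis
      using P_nonneg[OF jd] by (simp, intro sum_nonneg) (auto simp: h_def)
  qed
  have "err_prob r p m n B (gcomb r p m n B) \<le> (\<Sum>x\<in>blocks r n. \<Sum>i<r. block_prob p n x * h i (\<lambda>t. restr {i} (x t)))"
    unfolding err_prob_def by (intro sum_mono pt)
  also have "\<dots> = (\<Sum>i<r. \<Sum>x\<in>blocks r n. block_prob p n x * h i (\<lambda>t. restr {i} (x t)))"
    by (rule sum.swap)
  also have "\<dots> = (\<Sum>i<r. \<Sum>w\<in>blocks r n. block_prob (marg r p {i}) n w * h i w)"
    by (intro sum.cong refl block_marg_sum)
  also have "\<dots> = (\<Sum>i<r. err_prob r (marg r p {i}) m n B (ml r (marg r p {i}) m n B))"
    unfolding err_prob_def h_def by (intro sum.cong refl) auto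
  finally show ?thesis .
qed

lemma entropy_Hfull: "entropy r p {i} = Hfull r (marg r p {i})"
proof -
  have "(\<Sum>u\<in>restr {i} ` tuples r. if marg r p {i} u = 0 then 0 else marg r p {i} u * log 2 (marg r p {i} u))
      = (\<Sum>u\<in>tuples r. if marg r p {i} u = 0 then 0 else marg r p {i} u * log 2 (marg r p {i} u))"
  proof (rule sum.mono_neutral_left)
    show "restr {i} ` tuples r \<subseteq> tuples r" using restr_tuples by blast
    show "\<forall>u\<in>tuples r - restr {i} ` tuples r.
        (if marg r p {i} u = 0 then 0 else marg r p {i} u * log 2 (marg r p {i} u)) = 0"
    proof
      fix u assume "u \<in> tuples r - restr {i} ` tuples r"
      then have e: "{v \<in> tuples r. restr {i} v = u} = {}" by blast
      show "(if marg r p {i} u = 0 then 0 else marg r p {i} u * log 2 (marg r p {i} u)) = 0"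
        unfolding marg_def e by simp
    qed
  qed simp
  then show ?thesis unfolding entropy_def Hfull_def by simp
qed



lemma achievable_max:
  assumes jd: "is_joint_dist r p" and R0: "0 \<le> R"
    and R: "\<And>i. i < r \<Longrightarrow> Hfull r (marg r p {i}) < R"
  shows "achievable_sc r p R"
proof -
  have "\<forall>i\<in>{..<r}. \<exists>\<rho>. 0 \<le> \<rho> \<and> \<rho> < 1 \<and> (\<forall>n. (\<Sum>B\<in>blocks n (nat \<lceil>real n * R\<rceil>).
      err_prob r (marg r p {i}) (nat \<lceil>real n * R\<rceil>) n B (ml r (marg r p {i}) (nat \<lceil>real n * R\<rceil>) n B))
      \<le> real (card (blocks n (nat \<lceil>real n * R\<rceil>))) * \<rho> ^ n)"
    using ach_core[OF marg_jd[OF jd] R] by blast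
  then obtain \<rho> where rr: "\<forall>i\<in>{..<r}. 0 \<le> \<rho> i \<and> \<rho> i < 1 \<and> (\<forall>n. (\<Sum>B\<in>blocks n (nat \<lceil>real n * R\<rceil>).
      err_prob r (marg r p {i}) (nat \<lceil>real n * R\<rceil>) n B (ml r (marg r p {i}) (nat \<lceil>real n * R\<rceil>) n B))
      \<le> real (card (blocks n (nat \<lceil>real n * R\<rceil>))) * \<rho> i ^ n)"
    by (rule bchoice[THEN exE]) blast
  then have r: "\<And>i. i < r \<Longrightarrow> 0 \<le> \<rho> i \<and> \<rho> i < 1" and r: "\<And>i. i < r \<Longrightarrow> 0 \<le> \<rho> i \<and> \<rho> i < 1" and
    bd: "\<And>i n. i < r \<Longrightarrow> (\<Sum>B\<in>blocks n (nat \<lceil>real n * R\<rceil>).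
      err_prob r (marg r p {i}) (nat \<lceil>real n * R\<rceil>) n B (ml r (marg r p {i}) (nat \<lceil>real n * R\<rceil>) n B))
      \<le> real (card (blocks n (nat \<lceil>real n * R\<rceil>))) * \<rho> i ^ n"
    by auto
  show ?thesis unfolding achievable_sc_def
  proof (intro conjI allI impI R0)
    fix \<epsilon> :: real assume e: "0 < \<epsilon>"
    have "(\<lambda>n. \<Sum>i<r. \<rho> i ^ n) \<longlonglongrightarrow> 0"
      using r by (intro tendsto_null_sum LIMSEQ_power_zero) auto
    then have "eventually (\<lambda>n. (\<Sum>i<r. \<rho> i ^ n) < \<epsilon>) sequentially" using e by (rule order_tendstoD)
    then obtain N where N: "\<And>n. n \<ge> N \<Longrightarrow> (\<Sum>i<r. \<rho> i ^ n) < \<epsilon>"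
      unfolding eventually_sequentially by blast
    show "\<exists>N. \<forall>n\<ge>N. \<exists>B g. err_prob r p (nat \<lceil>real n * R\<rceil>) n B g \<le> \<epsilon>"
    proof (rule exI[of _ N], intro allI impI)
      fix n assume n: "N \<le> n"
      let ?m = "nat \<lceil>real n * R\<rceil>"
      let ?E = "\<lambda>B. \<Sum>i<r. err_prob r (marg r p {i}) ?m n B (ml r (marg r p {i}) ?m n B)"
      have "(\<Sum>B\<in>blocks n ?m. ?E B) = (\<Sum>i<r. \<Sum>B\<in>blocks n ?m. err_prob r (marg r p {i}) ?m n B (ml r (marg r p {i}) ?m n B))"
        by (rule sum.swap)
      also have "\<dots> \<le> (\<Sum>i<r. real (card (blocks n ?m)) * \<rho> i ^ n)"
        by (intro sum_mono bd) simp
      also have "\<dots> = real (card (blocks n ?m)) * (\<Sum>i<r. \<rho> i ^ n)" by (simp add: sum_distrib_left)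
      finally have tot: "(\<Sum>B\<in>blocks n ?m. ?E B) \<le> real (card (blocks n ?m)) * (\<Sum>i<r. \<rho> i ^ n)" .
      have ne: "blocks n ?m \<noteq> {}" using zero_block by blast
      obtain B where B: "?E B \<le> (\<Sum>i<r. \<rho> i ^ n)"
        using avg_exists[OF fin_blocks ne tot] by blast
      have "err_prob r p ?m n B (gcomb r p ?m n B) \<le> \<epsilon>"
        using comb_err[OF jd, of ?m n B] B N[OF n] by linarith
      then show "\<exists>B g. err_prob r p ?m n B g \<le> \<epsilon>" by blast
    qed
  qed
qed

lemma achievable_nonneg: "achievable_sc r p R \<Longrightarrow> 0 \<le> R"
  by (simp add: achievable_sc_def)

lemma Rsc_le:
  assumes "\<And>R. x < R \<Longrightarrow> achievable_sc r p R"
  shows "R_SW_sc r p \<le> x"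
proof (rule ccontr)
  let ?A = "{R. achievable_sc r p R}"
  assume "\<not> R_SW_sc r p \<le> x"
  then have lt: "x < Inf ?A" by (simp add: R_SW_sc_def)
  have bdd: "bdd_below ?A" by (rule bdd_belowI[of _ 0]) (auto dest: achievable_nonneg)
  have "(x + Inf ?A) / 2 \<in> ?A" using assms lt by simp
  then have "Inf ?A \<le> (x + Inf ?A) / 2" by (rule cInf_lower[OF _ bdd])
  then show False using lt by simp
qed

lemma Rsc_ge:
  assumes "achievable_sc r p R1" and "\<And>R. achievable_sc r p R \<Longrightarrow> x \<le> R"
  shows "x \<le> R_SW_sc r p"
  unfolding R_SW_sc_def using assms by (intro cInf_greatest) auto

lemma cond_full: "is_joint_dist r p \<Longrightarrow> cond_entropy r p {..<r} = Hfull r p"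
proof -
  assume jd: "is_joint_dist r p"
  have e: "{v \<in> tuples r. restr {} v = restr {} w} = tuples r" for w
    by (auto simp: restr_def)
  have m1: "marg r p {} (restr {} w) = 1" for w
    unfolding marg_def e using jd by (simp add: is_joint_dist_def)
  show ?thesis unfolding cond_entropy_def Hfull_def Diff_cancel m1 div_by_1 by (rule refl)
qed

lemma Hfull_le_RSW:
  assumes jd: "is_joint_dist r p" and r: "1 \<le> r"
  shows "Hfull r p \<le> real r * R_SW r p"
proof -
  let ?A = "{R. \<forall>S. S \<subseteq> {..<r} \<and> S \<noteq> {} \<longrightarrow> cond_entropy r p S \<le> real (card S) * R}"
  define R0 where "R0 = (\<Sum>S\<in>Pow {..<r}. \<bar>cond_entropy r p S\<bar>)"
  have R0n: "0 \<le> R0" unfolding R0_def by (intro sum_nonneg) auto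
  have "R0 \<in> ?A"
  proof (intro CollectI allI impI)
    fix S assume SS: "S \<subseteq> {..<r} \<and> S \<noteq> {}"
    then have S: "S \<subseteq> {..<r}" by simp
    obtain x where x: "x \<in> S" using SS by blast
    have "cond_entropy r p S \<le> \<bar>cond_entropy r p S\<bar>" by simp
    also have "\<dots> \<le> R0" unfolding R0_def using S by (intro member_le_sum) auto
    also have "\<dots> \<le> real (card S) * R0"
    proof -
      have "finite S" using S finite_subset by blast
      then have "1 \<le> card S" using x by (metis One_nat_def Suc_leI card_gt_0_iff empty_iff)
      then have "1 \<le> real (card S)" by simp
      then show ?thesis using mult_right_mono[of 1 "real (card S)" R0] R0n by simp
    qed
    finally show "cond_entropy r p S \<le> real (card S) * R0" .
  qed
  then have ne: "?A \<noteq> {}" by blast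
  have "Hfull r p / real r \<le> Inf ?A"
  proof (rule cInf_greatest[OF ne])
    fix R assume "R \<in> ?A"
    then have all: "\<forall>S. S \<subseteq> {..<r} \<and> S \<noteq> {} \<longrightarrow> cond_entropy r p S \<le> real (card S) * R" by simp
    have "0 \<in> {..<r}" using r by simp
    then have "{..<r} \<subseteq> {..<r} \<and> {..<r} \<noteq> {}" by blast
    then have "cond_entropy r p {..<r} \<le> real (card {..<r}) * R" using all by blast
    then have "Hfull r p \<le> real r * R" using cond_full[OF jd] by simp
    then show "Hfull r p / real r \<le> R" using r by (simp add: divide_le_eq mult.commute)
  qed
  then show ?thesis using r unfolding R_SW_def by (simp add: divide_le_eq mult.commute)
qed

lemma part2:
  assumes r: "1 \<le> r" and jd: "is_joint_dist r p"
  shows "R_SW_sc r p \<le> min (real r * R_SW r p) (Max ((\<lambda>i. entropy r p {i}) ` {..<r}))"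
proof -
  have a: "R_SW_sc r p \<le> Hfull r p"
    by (rule Rsc_le) (rule achievable_Hfull[OF jd])
  let ?M = "Max ((\<lambda>i. entropy r p {i}) ` {..<r})"
  have le: "entropy r p {i} \<le> ?M" if "i < r" for i using that by (intro Max_ge) auto
  have r0: "0 < r" using r by simp
  have M0: "0 \<le> ?M" using le[OF r0] entropy_Hfull[of r p 0] Hfull_nonneg[OF marg_jd[OF jd], of "{0}"] by linarith
  have b: "R_SW_sc r p \<le> ?M"
  proof (rule Rsc_le)
    fix R assume R: "?M < R"
    show "achievable_sc r p R"
    proof (rule achievable_max[OF jd])
      show "0 \<le> R" using M0 R by simp
      fix i assume "i < r"
      then show "Hfull r (marg r p {i}) < R" using le[of i] R entropy_Hfull[of r p i] by simp
    qed
  qed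
  show ?thesis using a b Hfull_le_RSW[OF jd r] by simp
qed



definition diag :: "nat \<Rightarrow> (tuple \<Rightarrow> real) \<Rightarrow> bool" where
  "diag r p \<longleftrightarrow> (\<forall>v. p v \<noteq> 0 \<longrightarrow> (\<forall>i<r. v i = v 0))"

lemma jd_supp: "is_joint_dist r p \<Longrightarrow> p v \<noteq> 0 \<Longrightarrow> v \<in> tuples r"
  unfolding is_joint_dist_def by auto

lemma diag_eq:
  assumes jd: "is_joint_dist r p" and dg: "diag r p" and pv: "p v \<noteq> 0" and pv': "p v' \<noteq> 0"
    and j: "j < r" and e: "v j = v' j"
  shows "v = v'"
proof
  fix i
  have tv: "v \<in> tuples r" "v' \<in> tuples r" using jd_supp[OF jd] pv pv' by auto
  show "v i = v' i"
  proof (cases "i < r")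
    case True
    have "v i = v 0" "v j = v 0" "v' i = v' 0" "v' j = v' 0"
      using dg pv pv' True j unfolding diag_def by auto
    then show ?thesis using e by simp
  next
    case False then show ?thesis using tv by (simp add: tuples_def)
  qed
qed

lemma single_sum:
  assumes "finite F" "a \<in> F" "\<And>v. v \<in> F \<Longrightarrow> v \<noteq> a \<Longrightarrow> f v = (0::real)"
  shows "sum f F = f a"
proof -
  have "sum f F = f a + sum f (F - {a})" using assms by (simp add: sum.remove)
  also have "sum f (F - {a}) = 0" using assms by (intro sum.neutral) auto
  finally show ?thesis by simp
qed

lemma G_sum:
  fixes G :: "real \<Rightarrow> real"
  assumes F: "finite F" and G0: "G 0 = 0"
    and u: "\<And>v v'. v \<in> F \<Longrightarrow> v' \<in> F \<Longrightarrow> p v \<noteq> 0 \<Longrightarrow> p v' \<noteq> 0 \<Longrightarrow> v = v'"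
  shows "G (sum p F) = (\<Sum>v\<in>F. G (p v))"
proof (cases "\<exists>a\<in>F. p a \<noteq> 0")
  case True
  then obtain a where a: "a \<in> F" "p a \<noteq> 0" by blast
  have z: "\<And>v. v \<in> F \<Longrightarrow> v \<noteq> a \<Longrightarrow> p v = 0" using u a by blast
  have "sum p F = p a" by (rule single_sum[OF F a(1) z])
  moreover have "(\<Sum>v\<in>F. G (p v)) = G (p a)"
    by (rule single_sum[OF F a(1)]) (simp add: z G0)
  ultimately show ?thesis by simp
next
  case False
  then show ?thesis using G0 by simp
qed

lemma Hfull_marg0:
  assumes jd: "is_joint_dist r p" and dg: "diag r p" and r: "1 \<le> r"
  shows "Hfull r (marg r p {0}) = Hfull r p"
proof -
  define G where "G y = (if y = 0 then 0 else y * log 2 y)" for y :: real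
  have "(\<Sum>u\<in>tuples r. G (marg r p {0} u)) = (\<Sum>u\<in>tuples r. \<Sum>v\<in>{v \<in> tuples r. restr {0} v = u}. G (p v))"
    unfolding marg_def
  proof (intro sum.cong refl G_sum)
    show "G 0 = 0" by (simp add: G_def)
    fix u v v' assume v: "v \<in> {v \<in> tuples r. restr {0} v = u}" and v': "v' \<in> {v \<in> tuples r. restr {0} v = u}"
      and pv: "p v \<noteq> 0" and pv': "p v' \<noteq> 0"
    have "restr {0} v = restr {0} v'" using v v' by simp
    then have "restr {0} v 0 = restr {0} v' 0" by simp
    then have "v 0 = v' 0" by (simp add: restr_def)
    then show "v = v'" using diag_eq[OF jd dg pv pv', of 0] r by simp
  qed simp
  also have "\<dots> = (\<Sum>v\<in>tuples r. G (p v))"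
    by (rule sum.group) (auto intro: restr_tuples)
  finally show ?thesis unfolding Hfull_def G_def by simp
qed

lemma cond_zero:
  assumes jd: "is_joint_dist r p" and dg: "diag r p" and S: "S \<subseteq> {..<r}" and j: "j < r" "j \<notin> S"
  shows "cond_entropy r p S = 0"
proof -
  let ?C = "{..<r} - S"
  have "(if p v = 0 then 0 else p v * log 2 (p v / marg r p ?C (restr ?C v))) = 0" if v: "v \<in> tuples r" for v
  proof (cases "p v = 0")
    case False
    have "marg r p ?C (restr ?C v) = p v"
      unfolding marg_def
    proof (rule single_sum)
      show "v \<in> {v' \<in> tuples r. restr ?C v' = restr ?C v}" using v by simp
      fix v' assume v': "v' \<in> {v' \<in> tuples r. restr ?C v' = restr ?C v}" and ne: "v' \<noteq> v"
      show "p v' = 0"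
      proof (rule ccontr)
        assume pv': "p v' \<noteq> 0"
        have "restr ?C v' = restr ?C v" using v' by simp
        then have "restr ?C v' j = restr ?C v j" by simp
        then have "v' j = v j" using j by (simp add: restr_def)
        then have "v' = v" using diag_eq[OF jd dg pv' False j(1)] by simp
        then show False using ne by simp
      qed
    qed simp
    then show ?thesis using False by simp
  qed simp
  then show ?thesis unfolding cond_entropy_def by simp
qed

lemma RSW_diag:
  assumes jd: "is_joint_dist r p" and dg: "diag r p" and r: "1 \<le> r" and H: "0 < Hfull r p"
  shows "R_SW r p = Hfull r p / real r"
proof -
  let ?A = "{R. \<forall>S. S \<subseteq> {..<r} \<and> S \<noteq> {} \<longrightarrow> cond_entropy r p S \<le> real (card S) * R}"
  have "?A = {Hfull r p / real r..}"
  proof (intro set_eqI iffI)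
    fix R assume "R \<in> ?A"
    then have all: "\<forall>S. S \<subseteq> {..<r} \<and> S \<noteq> {} \<longrightarrow> cond_entropy r p S \<le> real (card S) * R" by simp
    have "0 \<in> {..<r}" using r by simp
    then have "{..<r} \<subseteq> {..<r} \<and> {..<r} \<noteq> {}" by blast
    then have "cond_entropy r p {..<r} \<le> real (card {..<r}) * R" using all by blast
    then have "Hfull r p \<le> real r * R" using cond_full[OF jd] by simp
    then show "R \<in> {Hfull r p / real r..}" using r by (simp add: divide_le_eq mult.commute)
  next
    fix R assume "R \<in> {Hfull r p / real r..}"
    then have R: "Hfull r p \<le> real r * R" using r by (simp add: divide_le_eq mult.commute)
    then have R0: "0 \<le> R" using H r by (smt (verit) mult_nonneg_nonpos of_nat_0_le_iff)
    show "R \<in> ?A"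
    proof (intro CollectI allI impI)
      fix S assume S: "S \<subseteq> {..<r} \<and> S \<noteq> {}"
      show "cond_entropy r p S \<le> real (card S) * R"
      proof (cases "S = {..<r}")
        case True then show ?thesis using R cond_full[OF jd] by simp
      next
        case False
        then obtain j where "j < r" "j \<notin> S" using S by blast
        then have "cond_entropy r p S = 0" using cond_zero[OF jd dg] S by blast
        then show ?thesis using R0 by simp
      qed
    qed
  qed
  then show ?thesis unfolding R_SW_def by simp
qed



lemma P_nz: "block_prob p n x \<noteq> 0 \<Longrightarrow> t < n \<Longrightarrow> p (x t) \<noteq> 0"
  unfolding block_prob_def by (metis finite_lessThan lessThan_iff prod_zero_iff)

lemma cardC:
  assumes jd: "is_joint_dist r p" and dg: "diag r p"
  shows "card {x \<in> blocks r n. g (encode r m n B x) = x \<and> block_prob p n x \<noteq> 0} \<le> 2 ^ m"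
proof -
  let ?C = "{x \<in> blocks r n. g (encode r m n B x) = x \<and> block_prob p n x \<noteq> 0}"
  let ?e = "\<lambda>s. (\<lambda>i k. if i < r \<and> k < m then s k else (0::bit))"
  let ?Y = "?e ` tuples m"
  have sub: "?C \<subseteq> g ` ?Y"
  proof
    fix x assume x: "x \<in> ?C"
    have eqc: "x t i = x t 0" if "t < n" "i < r" for t i
      using dg P_nz[of p n x t] x that unfolding diag_def by auto
    define s where "s = (\<lambda>k. if k < m then (\<Sum>j<n. B k j * x j 0) else 0)"
    have s: "s \<in> tuples m" by (simp add: s_def tuples_def)
    have "encode r m n B x = ?e s"
    proof (intro ext)
      fix i k
      show "encode r m n B x i k = ?e s i k"
      proof (cases "i < r \<and> k < m")
        case True
        have "encode r m n B x i k = (if i < r \<and> k < m then (\<Sum>j<n. B k j * x j i) else 0)"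
          unfolding encode_def by (rule refl)
        also have "\<dots> = (\<Sum>j<n. B k j * x j i)" by (rule if_P[OF True])
        also have "\<dots> = (\<Sum>j<n. B k j * x j 0)"
        proof (rule sum.cong[OF refl])
          fix j assume "j \<in> {..<n}"
          then have "x j i = x j 0" using True eqc by blast
          then show "B k j * x j i = B k j * x j 0" by (rule arg_cong)
        qed
        also have "\<dots> = s k" unfolding s_def using True by (intro if_P[symmetric]) simp
        also have "s k = ?e s i k" by (rule if_P[symmetric]) (rule True)
        finally show ?thesis .
      next
        case False
        have "encode r m n B x i k = (if i < r \<and> k < m then (\<Sum>j<n. B k j * x j i) else 0)"
          unfolding encode_def by (rule refl)
        also have "\<dots> = 0" by (rule if_not_P[OF False])
        also have "0 = ?e s i k" by (rule if_not_P[OF False, symmetric])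
        finally show ?thesis .
      qed
    qed
    have "x = g (encode r m n B x)" using x by simp
    then have "x = g (?e s)" using \<open>encode r m n B x = ?e s\<close> by simp
    then show "x \<in> g ` ?Y" using s by (intro image_eqI[of x g "?e s"] imageI)
  qed
  have "card ?C \<le> card (g ` ?Y)" by (rule card_mono[OF _ sub]) simp
  also have "\<dots> \<le> card ?Y" by (rule card_image_le) simp
  also have "\<dots> \<le> card (tuples m)" by (rule card_image_le) simp
  also have "\<dots> \<le> 2 ^ m" by (rule card_tuples_le)
  finally show ?thesis .
qed

lemma pt_bound:
  fixes P a t :: real
  assumes P: "0 \<le> P" and a: "0 < a" and t: "0 < t"
  shows "P \<le> a + a powr (- t) * P powr (1 + t)"
proof (cases "P \<le> a")
  case True
  have "0 \<le> a powr (- t) * P powr (1 + t)" by simp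
  then show ?thesis using True by linarith
next
  case False
  then have Pp: "0 < P" and gt: "1 \<le> P / a" using a by auto
  have "1 \<le> (P / a) powr t" using gt t by (simp add: ge_one_powr_ge_zero)
  then have "P * 1 \<le> P * (P / a) powr t" using Pp by (intro mult_left_mono) auto
  also have "P * (P / a) powr t = a powr (- t) * P powr (1 + t)"
    using Pp a by (simp add: powr_divide powr_add powr_minus_divide)
  finally show ?thesis using a by simp
qed

lemma success_bound:
  assumes jd: "is_joint_dist r p" and dg: "diag r p" and t: "0 < t" and R0: "0 \<le> R"
  shows "1 - err_prob r p (nat \<lceil>real n * R\<rceil>) n B g \<le> 2 * (2 powr (R - \<tau>)) ^ n + (Zf r p (1 + t) * 2 powr (t * \<tau>)) ^ n"
proof -
  define m where "m = nat \<lceil>real n * R\<rceil>"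
  let ?C = "{x \<in> blocks r n. g (encode r m n B x) = x \<and> block_prob p n x \<noteq> 0}"
  define a where "a = (2::real) powr (- (real n * \<tau>))"
  have a0: "0 < a" by (simp add: a_def)
  have "err_prob r p m n B g + (\<Sum>x\<in>blocks r n. if g (encode r m n B x) = x then block_prob p n x else 0)
      = (\<Sum>x\<in>blocks r n. block_prob p n x)"
    unfolding err_prob_def sum.distrib[symmetric] by (intro sum.cong refl) auto
  then have e1: "1 - err_prob r p m n B g = (\<Sum>x\<in>blocks r n. if g (encode r m n B x) = x then block_prob p n x else 0)"
    using sum_P[OF jd] by simp
  also have "\<dots> = (\<Sum>x\<in>blocks r n. if g (encode r m n B x) = x \<and> block_prob p n x \<noteq> 0 then block_prob p n x else 0)"
    by (intro sum.cong refl) auto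
  also have "\<dots> = (\<Sum>x\<in>?C. block_prob p n x)" by (simp add: sum.inter_filter)
  also have "\<dots> \<le> (\<Sum>x\<in>?C. a + a powr (- t) * block_prob p n x powr (1 + t))"
    by (intro sum_mono pt_bound P_nonneg[OF jd] a0 t)
  also have "\<dots> = real (card ?C) * a + a powr (- t) * (\<Sum>x\<in>?C. block_prob p n x powr (1 + t))"
    by (simp add: sum.distrib sum_distrib_left)
  also have "\<dots> \<le> 2 ^ m * a + a powr (- t) * (\<Sum>x\<in>blocks r n. block_prob p n x powr (1 + t))"
  proof (intro add_mono mult_right_mono mult_left_mono sum_mono2)
    have "card ?C \<le> 2 ^ m" by (rule cardC[OF jd dg])
    then have "real (card ?C) \<le> real (2 ^ m)" by (rule of_nat_mono)
    then show "real (card ?C) \<le> 2 ^ m" by simp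
  qed (use a0 in auto)
  also have "(\<Sum>x\<in>blocks r n. block_prob p n x powr (1 + t)) = Zf r p (1 + t) ^ n"
    unfolding Zf_def by (rule sum_P_powr[OF jd])
  also have "2 ^ m * a \<le> 2 * (2 powr (R - \<tau>)) ^ n"
  proof -
    have nr: "0 \<le> real n * R" using R0 by simp
    have "real m = real_of_int \<lceil>real n * R\<rceil>" unfolding m_def using nr by simp
    then have mle: "real m \<le> real n * R + 1" using ceiling_correct[of "real n * R"] by linarith
    have "2 ^ m * a = 2 powr (real m - real n * \<tau>)"
      by (simp add: a_def powr_realpow[symmetric] powr_diff powr_minus_divide)
    also have "\<dots> \<le> 2 powr (1 + real n * (R - \<tau>))"
      using mle by (intro powr_mono) (auto simp: algebra_simps)
    also have "\<dots> = 2 * (2 powr (R - \<tau>)) ^ n"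
      by (simp add: powr_add powr_power mult.commute)
    finally show ?thesis .
  qed
  also have "a powr (- t) * Zf r p (1 + t) ^ n = (Zf r p (1 + t) * 2 powr (t * \<tau>)) ^ n"
    by (simp add: a_def powr_powr powr_power power_mult_distrib mult_ac)
  finally show ?thesis unfolding m_def by simp
qed

lemma converse:
  assumes jd: "is_joint_dist r p" and dg: "diag r p" and ach: "achievable_sc r p R"
  shows "Hfull r p \<le> R"
proof (rule ccontr)
  assume "\<not> Hfull r p \<le> R"
  then have RH: "R < Hfull r p" by simp
  have R0: "0 \<le> R" using ach by (simp add: achievable_sc_def)
  define \<tau> where "\<tau> = (R + Hfull r p) / 2"
  have \<tau>: "R < \<tau>" "\<tau> < Hfull r p" using RH by (auto simp: \<tau>_def)
  obtain t where t: "0 < t" "t < 1" and lt: "Zf r p (1 + t) * 2 powr (t * \<tau>) < 1"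
    using exists_t_conv[OF jd \<tau>(2)] by blast
  have q1: "2 powr (R - \<tau>) < (1::real)"
  proof -
    have "(2::real) powr (R - \<tau>) < 2 powr 0" using \<tau> by (intro powr_less_mono) auto
    then show ?thesis by simp
  qed
  have l1: "(\<lambda>n. (2 powr (R - \<tau>)) ^ n) \<longlonglongrightarrow> 0"
    by (rule LIMSEQ_power_zero) (use q1 in simp)
  have z0: "0 \<le> Zf r p (1 + t) * 2 powr (t * \<tau>)" using Zf_nonneg by simp
  have l2: "(\<lambda>n. (Zf r p (1 + t) * 2 powr (t * \<tau>)) ^ n) \<longlonglongrightarrow> 0"
    by (rule LIMSEQ_power_zero) (use lt z0 in simp)
  have l3: "(\<lambda>n. 2 * (2 powr (R - \<tau>)) ^ n) \<longlonglongrightarrow> 2 * 0"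
    by (rule tendsto_mult[OF tendsto_const l1])
  have "(\<lambda>n. 2 * (2 powr (R - \<tau>)) ^ n + (Zf r p (1 + t) * 2 powr (t * \<tau>)) ^ n) \<longlonglongrightarrow> 2 * 0 + 0"
    by (rule tendsto_add[OF l3 l2])
  then have "eventually (\<lambda>n. 2 * (2 powr (R - \<tau>)) ^ n + (Zf r p (1 + t) * 2 powr (t * \<tau>)) ^ n < 1/2) sequentially"
    by (intro order_tendstoD) auto
  then obtain N2 where N2: "\<And>n. n \<ge> N2 \<Longrightarrow> 2 * (2 powr (R - \<tau>)) ^ n + (Zf r p (1 + t) * 2 powr (t * \<tau>)) ^ n < 1/2"
    unfolding eventually_sequentially by blast
  obtain N1 where N1: "\<And>n. n \<ge> N1 \<Longrightarrow> \<exists>B g. err_prob r p (nat \<lceil>real n * R\<rceil>) n B g \<le> 1/2"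
  proof -
    have A: "\<forall>\<epsilon>>0. \<exists>N. \<forall>n\<ge>N. \<exists>B g. err_prob r p (nat \<lceil>real n * R\<rceil>) n B g \<le> \<epsilon>"
      using ach unfolding achievable_sc_def by blast
    have "\<exists>N. \<forall>n\<ge>N. \<exists>B g. err_prob r p (nat \<lceil>real n * R\<rceil>) n B g \<le> 1/2"
      using A[rule_format, of "1/2"] by simp
    then show ?thesis using that by blast
  qed
  define n where "n = max N1 N2"
  obtain B g where e: "err_prob r p (nat \<lceil>real n * R\<rceil>) n B g \<le> 1/2" using N1[of n] by (auto simp: n_def)
  have "1 - err_prob r p (nat \<lceil>real n * R\<rceil>) n B g \<le> 2 * (2 powr (R - \<tau>)) ^ n + (Zf r p (1 + t) * 2 powr (t * \<tau>)) ^ n"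
    by (rule success_bound[OF jd dg t(1) R0])
  then show False using e N2[of n] by (simp add: n_def)
qed



lemma part1b:
  assumes r: "1 \<le> r" and jd: "is_joint_dist r p" and dg0: "\<forall>v. p v \<noteq> 0 \<longrightarrow> (\<forall>i<r. v i = v 0)"
    and H: "entropy r p {0} > 0"
  shows "R_SW r p = entropy r p {0} / real r \<and> R_SW_sc r p = entropy r p {0}"
proof -
  have dg: "diag r p" using dg0 by (simp add: diag_def)
  have HH: "entropy r p {0} = Hfull r p"
    using entropy_Hfull[of r p 0] Hfull_marg0[OF jd dg r] by simp
  have a: "R_SW r p = entropy r p {0} / real r"
    using RSW_diag[OF jd dg r] H HH by simp
  have b1: "R_SW_sc r p \<le> Hfull r p"
    by (rule Rsc_le) (rule achievable_Hfull[OF jd])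
  have b2: "Hfull r p \<le> R_SW_sc r p"
  proof (rule Rsc_ge)
    show "achievable_sc r p (Hfull r p + 1)" by (rule achievable_Hfull[OF jd]) simp
    fix R assume "achievable_sc r p R"
    then show "Hfull r p \<le> R" by (rule converse[OF jd dg])
  qed
  show ?thesis using a b1 b2 HH by simp
qed

definition p0 :: "nat \<Rightarrow> tuple \<Rightarrow> real" where
  "p0 r v = (if v \<in> {(\<lambda>_. 0), (\<lambda>i. if i < r then 1 else 0)} then 1/2 else 0)"

lemma p0_props:
  assumes r: "1 \<le> r"
  shows "is_joint_dist r (p0 r) \<and> (\<forall>v. p0 r v \<noteq> 0 \<longrightarrow> (\<forall>i<r. v i = v 0)) \<and> entropy r (p0 r) {0} > 0"
proof -
  let ?z = "(\<lambda>_. 0) :: tuple"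
  let ?o = "(\<lambda>i. if i < r then 1 else 0) :: tuple"
  let ?K = "{?z, ?o}"
  have ne: "?z \<noteq> ?o"
  proof
    assume "?z = ?o"
    then have "?z 0 = ?o 0" by (rule fun_cong)
    then show False using r by simp
  qed
  have K: "?K \<subseteq> tuples r" by (auto simp: tuples_def)
  have nz: "?z \<notin> {?o}" using ne by blast
  have cK: "card ?K = 2" using card_insert_disjoint[OF _ nz] by simp
  have sumK: "(\<Sum>v\<in>tuples r. if v \<in> ?K then c else 0) = 2 * c" for c :: real
  proof -
    have "(\<Sum>v\<in>tuples r. if v \<in> ?K then c else 0) = (\<Sum>v\<in>tuples r \<inter> ?K. c)"
      by (rule sum.inter_restrict[symmetric]) simp
    also have "tuples r \<inter> ?K = ?K" using K by blast
    finally show ?thesis using cK by simp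
  qed
  have jd: "is_joint_dist r (p0 r)"
    unfolding is_joint_dist_def
  proof (intro conjI allI impI)
    fix v show "0 \<le> p0 r v" by (simp add: p0_def)
  next
    fix v assume "v \<notin> tuples r" then show "p0 r v = 0" using K unfolding p0_def by auto
  next
    show "(\<Sum>v\<in>tuples r. p0 r v) = 1" unfolding p0_def using sumK[of "1/2"] by simp
  qed
  have dg0: "\<forall>v. p0 r v \<noteq> 0 \<longrightarrow> (\<forall>i<r. v i = v 0)"
  proof (intro allI impI)
    fix v i assume "p0 r v \<noteq> 0" and i: "i < r"
    then have "v = ?z \<or> v = ?o" by (simp add: p0_def split: if_splits)
    then show "v i = v 0" using i r by auto
  qed
  have dg: "diag r (p0 r)" using dg0 by (simp add: diag_def)
  have "Hfull r (p0 r) = - (\<Sum>v\<in>tuples r. if v \<in> ?K then - (1/2) else 0)"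
    unfolding Hfull_def by (intro arg_cong[where f=uminus] sum.cong refl) (auto simp: p0_def log_divide)
  also have "\<dots> = 1" using sumK[of "- (1/2)"] by simp
  finally have "Hfull r (p0 r) = 1" .
  then have "entropy r (p0 r) {0} = 1"
    using entropy_Hfull[of r "p0 r" 0] Hfull_marg0[OF jd dg r] by simp
  then show ?thesis using jd dg0 by simp
qed

theorem claim2:
  shows "(\<forall>r::nat. 2 \<le> r \<longrightarrow>
            (\<exists>p. is_joint_dist r p \<and> R_SW_sc r p > R_SW r p) \<and>
            (\<forall>p. is_joint_dist r p
                 \<and> (\<forall>v. p v \<noteq> 0 \<longrightarrow> (\<forall>i<r. v i = v 0))
                 \<and> entropy r p {0} > 0
               \<longrightarrow> R_SW r p = entropy r p {0} / real r \<and> R_SW_sc r p = entropy r p {0}))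
       \<and> (\<forall>(r::nat) p. 1 \<le> r \<and> is_joint_dist r p \<longrightarrow>
            R_SW_sc r p \<le> min (real r * R_SW r p) (Max ((\<lambda>i. entropy r p {i}) ` {..<r})))"
proof (intro conjI allI impI)
  fix r :: nat assume r2: "2 \<le> r"
  then have r1: "1 \<le> r" by simp
  show "\<exists>p. is_joint_dist r p \<and> R_SW_sc r p > R_SW r p"
  proof (rule exI[of _ "p0 r"], intro conjI)
    have pr: "is_joint_dist r (p0 r) \<and> (\<forall>v. p0 r v \<noteq> 0 \<longrightarrow> (\<forall>i<r. v i = v 0)) \<and> entropy r (p0 r) {0} > 0"
      by (rule p0_props[OF r1])
    then show "is_joint_dist r (p0 r)" by simp
    have e: "R_SW r (p0 r) = entropy r (p0 r) {0} / real r \<and> R_SW_sc r (p0 r) = entropy r (p0 r) {0}"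
      using part1b[OF r1] pr by blast
    have "entropy r (p0 r) {0} / real r < entropy r (p0 r) {0}"
      using pr r2 by (simp add: divide_less_eq)
    then show "R_SW_sc r (p0 r) > R_SW r (p0 r)" using e by simp
  qed
next
  fix r :: nat and p assume r2: "2 \<le> r" and
    h: "is_joint_dist r p \<and> (\<forall>v. p v \<noteq> 0 \<longrightarrow> (\<forall>i<r. v i = v 0)) \<and> entropy r p {0} > 0"
  show "R_SW r p = entropy r p {0} / real r"
    using part1b[of r p] r2 h by simp
next
  fix r :: nat and p assume r2: "2 \<le> r" and
    h: "is_joint_dist r p \<and> (\<forall>v. p v \<noteq> 0 \<longrightarrow> (\<forall>i<r. v i = v 0)) \<and> entropy r p {0} > 0"
  show "R_SW_sc r p = entropy r p {0}"
    using part1b[of r p] r2 h by simp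
next
  fix r :: nat and p assume h: "1 \<le> r \<and> is_joint_dist r p"
  then show "R_SW_sc r p \<le> min (real r * R_SW r p) (Max ((\<lambda>i. entropy r p {i}) ` {..<r}))"
    using part2 by blast
qed


end
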